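(* Let $p$ be a prime, $q=p^r$, $\mathscr{C}\subseteq\mathbb{F}_q^n$ a linear code over $\mathbb{F}_q$ of dimension $k$ with $1\le k<n$, and $\mathscr{D}=\{(\lambda,\ldots,\lambda):\lambda\in\mathbb{F}_{q^k}\}\subset\mathbb{F}_{q^k}^m$ ($m\ge2$). Let $f_1,\ldots,f_{q^k}:\mathscr{C}\to\mathbb{F}_p$ be functions such that the $q^k\times q^k$ matrix $H=[\zeta^{f_j(\mathbf{c})}]_{1\le j\le q^k,\ \mathbf{c}\in\mathscr{C}}$ is a normalized $\mathrm{BH}(q^k,p)$ matrix, i.e. $HH^\dagger=q^kI$, $f_1\equiv0$ and $f_j(\mathbf{0})=0$ for all $j$. Put $\phi_j=q^{-k/2}\sum_{\mathbf{c}\in\mathscr{C}}\zeta^{f_j(\mathbf{c})}|\mathbf{c}\rangle$ and $Q=\operatorname{span}\{\phi_j^{\otimes m}:1\le j\le q^k\}\subseteq(\mathbb{C}^q)^{\otimes nm}$. If $Q$ is a stabilizer code, then $H$ is equivalent to the $rk$-fold Kronecker product of the Fourier matrix $[\zeta^{(a-1)(b-1)}]_{a,b=1}^p$ of order $p$.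
   Context: $\zeta=e^{2\pi i/p}$; $\operatorname{tr}:\mathbb{F}_q\to\mathbb{F}_p$ is the trace; $\mathbf{u}.\mathbf{v}=\sum_iu_iv_i$. Qudits: $(\mathbb{C}^q)^{\otimes N}$ has orthonormal basis $|\mathbf{x}\rangle$, $\mathbf{x}\in\mathbb{F}_q^N$. $X(a)|x\rangle=|x+a\rangle$, $Z(b)|x\rangle=\zeta^{\operatorname{tr}(bx)}|x\rangle$, extended to $X(\mathbf{a}),Z(\mathbf{b})$ on $(\mathbb{C}^q)^{\otimes N}$ by tensor products. Error group $\mathcal{P}_N=\{\omega^cX(\mathbf{a})Z(\mathbf{b}):\mathbf{a},\mathbf{b}\in\mathbb{F}_q^N\}$ with $\omega=\zeta,c\in\mathbb{F}_p$ for odd $p$ and $\omega=i$, $c\in\{0,1,2,3\}$ for $p=2$. For a subspace $Q$, $\operatorname{Stab}(Q)=\{E\in\mathcal{P}_N:Ev=v\ \forall v\in Q\}$, and $Q$ is a stabilizer code if $Q=\{v:Ev=v\ \forall E\in\operatorname{Stab}(Q)\}$. A $\mathrm{BH}(N,p)$ matrix is an $N\times N$ matrix with entries $p$-th roots of unity and $HH^\dagger=NI$; two such matrices are equivalent if one is obtained from the other by permuting rows and columns and multiplying rows and columns by $p$-th roots of unity. *)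

theory Defs
  imports Complex_Main "HOL-Library.Cardinality" "HOL-Computational_Algebra.Primes"
begin

definition zeta :: "nat \<Rightarrow> complex" where
  "zeta p = cis (2 * pi / real p)"

definition trace :: "nat \<Rightarrow> nat \<Rightarrow> 'a::field \<Rightarrow> 'a" where
  "trace p r x = (\<Sum>i<r. x ^ (p ^ i))"

definition fp_rep :: "nat \<Rightarrow> 'a::field \<Rightarrow> nat" where
  "fp_rep p y = (THE i. i < p \<and> of_nat i = y)"

definition Fvec :: "nat \<Rightarrow> (nat \<Rightarrow> 'a::field) set" where
  "Fvec N = {x. \<forall>i\<ge>N. x i = 0}"

definition lin_comb :: "(nat \<Rightarrow> 'a::field) set \<Rightarrow> ((nat \<Rightarrow> 'a) \<Rightarrow> 'a) \<Rightarrow> (nat \<Rightarrow> 'a)" where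
  "lin_comb B l = (\<lambda>i. \<Sum>b\<in>B. l b * b i)"

definition linear_code :: "nat \<Rightarrow> nat \<Rightarrow> (nat \<Rightarrow> 'a::field) set \<Rightarrow> bool" where
  "linear_code n k C \<longleftrightarrow> C \<subseteq> Fvec n \<and>
     (\<exists>B. finite B \<and> card B = k \<and> B \<subseteq> C \<and>
        (\<forall>l. lin_comb B l = (\<lambda>_. 0) \<longrightarrow> (\<forall>b\<in>B. l b = 0)) \<and>
        C = {lin_comb B l | l. True})"

section \<open>Qudit space (C^q)^{tensor N}: complex functions on F_q^N\<close>

definition qspace :: "nat \<Rightarrow> ((nat \<Rightarrow> 'a::field) \<Rightarrow> complex) set" where
  "qspace N = {v. \<forall>x. x \<notin> Fvec N \<longrightarrow> v x = 0}"

definition phases :: "nat \<Rightarrow> complex set" where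
  "phases p = (if p = 2 then {\<i> ^ c | c. c < 4} else {zeta p ^ c | c. c < p})"

text \<open>Error group P_N, an element omega^c X(a) Z(b) represented by (omega^c, a, b).\<close>
definition pauli :: "nat \<Rightarrow> nat \<Rightarrow> (complex \<times> (nat \<Rightarrow> 'a::field) \<times> (nat \<Rightarrow> 'a)) set" where
  "pauli p N = {(w, a, b). w \<in> phases p \<and> a \<in> Fvec N \<and> b \<in> Fvec N}"

text \<open>Action: omega^c X(a) Z(b) |x> = omega^c zeta^{tr(b.x)} |x+a>.\<close>
definition pauli_act :: "nat \<Rightarrow> nat \<Rightarrow> nat \<Rightarrow> complex \<times> (nat \<Rightarrow> 'a::field) \<times> (nat \<Rightarrow> 'a)
    \<Rightarrow> ((nat \<Rightarrow> 'a) \<Rightarrow> complex) \<Rightarrow> ((nat \<Rightarrow> 'a) \<Rightarrow> complex)" where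
  "pauli_act p r N E v = (case E of (w, a, b) \<Rightarrow>
     (\<lambda>y. w * zeta p ^ fp_rep p (trace p r (\<Sum>i<N. b i * (y i - a i))) * v (\<lambda>i. y i - a i)))"

definition Stab :: "nat \<Rightarrow> nat \<Rightarrow> nat \<Rightarrow> ((nat \<Rightarrow> 'a::field) \<Rightarrow> complex) set
    \<Rightarrow> (complex \<times> (nat \<Rightarrow> 'a) \<times> (nat \<Rightarrow> 'a)) set" where
  "Stab p r N Q = {E \<in> pauli p N. \<forall>v\<in>Q. pauli_act p r N E v = v}"

definition stabilizer_code :: "nat \<Rightarrow> nat \<Rightarrow> nat \<Rightarrow> ((nat \<Rightarrow> 'a::field) \<Rightarrow> complex) set \<Rightarrow> bool" where
  "stabilizer_code p r N Q \<longleftrightarrow>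
     Q = {v \<in> qspace N. \<forall>E\<in>Stab p r N Q. pauli_act p r N E v = v}"

definition phi :: "nat \<Rightarrow> nat \<Rightarrow> (nat \<Rightarrow> 'a::field) set \<Rightarrow> (nat \<Rightarrow> (nat \<Rightarrow> 'a) \<Rightarrow> nat)
    \<Rightarrow> nat \<Rightarrow> (nat \<Rightarrow> 'a) \<Rightarrow> complex" where
  "phi p qk C f j x = (if x \<in> C then complex_of_real (1 / sqrt (real qk)) * zeta p ^ f j x else 0)"

definition block :: "nat \<Rightarrow> nat \<Rightarrow> (nat \<Rightarrow> 'a::field) \<Rightarrow> (nat \<Rightarrow> 'a)" where
  "block n t x = (\<lambda>i. if i < n then x (t * n + i) else 0)"

definition tensor_pow :: "nat \<Rightarrow> nat \<Rightarrow> ((nat \<Rightarrow> 'a::field) \<Rightarrow> complex) \<Rightarrow> ((nat \<Rightarrow> 'a) \<Rightarrow> complex)" where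
  "tensor_pow n m v = (\<lambda>x. if x \<in> Fvec (n * m) then (\<Prod>t<m. v (block n t x)) else 0)"

definition cspan_fin :: "nat \<Rightarrow> (nat \<Rightarrow> ('b \<Rightarrow> complex)) \<Rightarrow> ('b \<Rightarrow> complex) set" where
  "cspan_fin M g = {(\<lambda>x. \<Sum>j<M. w j * g j x) | w. True}"

definition bh_equiv :: "nat \<Rightarrow> ('r \<Rightarrow> 'c \<Rightarrow> complex) \<Rightarrow> 'r set \<Rightarrow> 'c set
    \<Rightarrow> ('s \<Rightarrow> 'd \<Rightarrow> complex) \<Rightarrow> 's set \<Rightarrow> 'd set \<Rightarrow> bool" where
  "bh_equiv p H R C K S D \<longleftrightarrow>
     (\<exists>\<sigma> \<tau> \<alpha> \<beta>. bij_betw \<sigma> R S \<and> bij_betw \<tau> C D \<and>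
        (\<forall>j\<in>R. \<alpha> j ^ p = 1) \<and> (\<forall>c\<in>C. \<beta> c ^ p = 1) \<and>
        (\<forall>j\<in>R. \<forall>c\<in>C. H j c = \<alpha> j * \<beta> c * K (\<sigma> j) (\<tau> c)))"

text \<open>Fourier matrix of order p, 0-indexed: entry (a,b) = zeta^(a*b).\<close>
definition fourier :: "nat \<Rightarrow> nat \<Rightarrow> nat \<Rightarrow> complex" where
  "fourier p a b = zeta p ^ (a * b)"

text \<open>L-fold Kronecker power of a p x p matrix F (0-indexed, standard ordering):
  F^{(L+1)} = F kron F^{(L)}.\<close>
fun kron_pow :: "nat \<Rightarrow> (nat \<Rightarrow> nat \<Rightarrow> complex) \<Rightarrow> nat \<Rightarrow> nat \<Rightarrow> nat \<Rightarrow> complex" where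
  "kron_pow p F 0 a b = 1"
| "kron_pow p F (Suc L) a b =
     F (a div p ^ L) (b div p ^ L) * kron_pow p F L (a mod p ^ L) (b mod p ^ L)"

end

theory Submission
  imports Defs
begin

lemma ofnat_card_zero: "(of_nat CARD('a::{finite,field}) :: 'a) = 0"
proof -
  have "(\<Sum>x\<in>UNIV. x + 1) = (\<Sum>x\<in>(\<lambda>x. x + 1) ` (UNIV::'a set). x)"
    by (subst sum.reindex) (auto simp: inj_on_def)
  also have "(\<lambda>x. x + 1) ` (UNIV::'a set) = UNIV"
    by (rule surjI[where f="\<lambda>x. x - 1"]) simp
  finally have "(\<Sum>x\<in>(UNIV::'a set). x) + of_nat CARD('a) = (\<Sum>x\<in>UNIV. x)"
    by (simp add: sum.distrib)
  thus ?thesis by simp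
qed

lemma char_p:
  assumes "prime p" "CARD('a::{finite,field}) = p ^ r"
  shows "(of_nat p :: 'a) = 0"
proof -
  have "(of_nat p :: 'a) ^ r = 0" using ofnat_card_zero[where 'a='a] assms(2) by (simp add: of_nat_power)
  thus ?thesis by simp
qed

lemma ofnat_inv:
  assumes "prime p" "(of_nat p :: 'a::field) = 0" "0 < e" "e < p"
  shows "\<exists>a. (of_nat a :: 'a) * of_nat e = 1"
proof -
  have "\<not> p dvd e" using assms(3,4) by (auto dest: dvd_imp_le)
  hence "coprime p e" using assms(1) by (simp add: prime_imp_coprime)
  hence "gcd e p = 1" by (simp add: coprime_commute)
  then obtain x y where "e * x = p * y + 1" using bezout_nat[of e p] assms(3) by auto
  hence "(of_nat (e*x) :: 'a) = of_nat (p*y) + 1" by (metis of_nat_1 of_nat_add)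
  hence "(of_nat e :: 'a) * of_nat x = 1" using assms(2) by simp
  thus ?thesis by (auto simp: mult.commute)
qed

lemma ofnat_mod:
  assumes "(of_nat p :: 'a::field) = 0"
  shows "(of_nat (c mod p) :: 'a) = of_nat c"
proof -
  have "(of_nat c :: 'a) = of_nat (p * (c div p) + c mod p)" by simp
  also have "\<dots> = of_nat (c mod p)" using assms by (simp only: of_nat_add of_nat_mult) simp
  finally show ?thesis by simp
qed

lemma ofnat_neg:
  assumes "(of_nat p :: 'a::field) = 0" "p \<ge> 1"
  shows "(of_nat (p - 1) :: 'a) = - 1"
proof -
  have "(of_nat (p - 1) :: 'a) + 1 = of_nat p" using assms(2) by (metis Suc_diff_1 One_nat_def less_le_trans zero_less_one of_nat_Suc add.commute le_less)
  thus ?thesis using assms(1) by (simp add: eq_neg_iff_add_eq_0)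
qed

lemma ofnat_distinct:
  assumes "prime p" "(of_nat p :: 'a::field) = 0" "c < p" "c' < p" "(of_nat c :: 'a) = of_nat c'"
  shows "c = c'"
proof (rule ccontr)
  assume ne: "c \<noteq> c'"
  { fix x y :: nat assume xy: "x < y" "y < p" "(of_nat x :: 'a) = of_nat y"
    have "0 < y - x" "y - x < p" using xy by auto
    then obtain a where "(of_nat a :: 'a) * of_nat (y - x) = 1" using ofnat_inv[OF assms(1,2)] by blast
    moreover have "(of_nat (y - x) :: 'a) = 0" using xy by (simp add: of_nat_diff)
    ultimately have False by simp }
  thus False using ne assms by (metis linorder_neq_iff)
qed

definition dig :: "nat \<Rightarrow> nat \<Rightarrow> nat \<Rightarrow> nat" where
  "dig p i d = d div p ^ i mod p"

lemma dig_mod: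
  assumes "p > 0" "i < l"
  shows "dig p i (d mod p ^ l) = dig p i d"
proof -
  have pl: "p ^ l = p ^ i * p ^ (l - i)" using assms by (simp add: power_add[symmetric])
  have "d mod p ^ l = p ^ i * (d div p ^ i mod p ^ (l - i)) + d mod p ^ i"
    unfolding pl by (rule mod_mult2_eq)
  hence "d mod p ^ l div p ^ i = d div p ^ i mod p ^ (l - i)" using assms by simp
  moreover have "p dvd p ^ (l - i)" using assms by simp
  ultimately show ?thesis unfolding dig_def by (simp add: mod_mod_cancel)
qed

lemma dig_top:
  assumes "p > 0" "d < p ^ Suc l"
  shows "dig p l d = d div p ^ l"
  using assms unfolding dig_def by (simp add: less_mult_imp_div_less mult.commute)

lemma num_digits:
  assumes "p > 0" "\<forall>i<l. c i < p"
  shows "(\<Sum>i<l. c i * p ^ i) < p ^ l \<and> (\<forall>i<l. dig p i (\<Sum>i<l. c i * p ^ i) = c i)"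
  using assms(2)
proof (induction l)
  case 0 then show ?case by simp
next
  case (Suc l)
  let ?S = "\<Sum>i<l. c i * p ^ i"
  have IH: "?S < p ^ l" "\<forall>i<l. dig p i ?S = c i" using Suc by auto
  have cl: "c l < p" using Suc by auto
  have eq: "(\<Sum>i<Suc l. c i * p ^ i) = ?S + c l * p ^ l" by simp
  have lt: "?S + c l * p ^ l < p ^ Suc l"
  proof -
    have "?S + c l * p ^ l < p ^ l + c l * p ^ l" using IH by simp
    also have "\<dots> = (c l + 1) * p ^ l" by simp
    also have "\<dots> \<le> p * p ^ l" using cl by (intro mult_right_mono) auto
    finally show ?thesis by simp
  qed
  have "dig p i (?S + c l * p ^ l) = c i" if "i < Suc l" for i
  proof (cases "i = l")
    case True
    have "(?S + c l * p ^ l) div p ^ l = c l" using IH(1) assms(1) by simp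
    thus ?thesis using True cl unfolding dig_def by simp
  next
    case False
    hence il: "i < l" using that by simp
    have "(?S + c l * p ^ l) mod p ^ l = ?S mod p ^ l" by simp
    also have "\<dots> = ?S" using IH(1) by simp
    finally have "dig p i ((?S + c l * p ^ l) mod p ^ l) = dig p i ?S" by simp
    moreover have "dig p i ((?S + c l * p ^ l) mod p ^ l) = dig p i (?S + c l * p ^ l)"
      by (rule dig_mod[OF assms(1) il])
    ultimately show ?thesis using IH(2) il by simp
  qed
  thus ?case using lt eq by simp
qed

lemma digits_inj:
  assumes "p > 0" "d < p ^ l" "d' < p ^ l" "\<forall>i<l. dig p i d = dig p i d'"
  shows "d = d'"
proof -
  have "\<forall>i<l. dig p i d = dig p i d' \<Longrightarrow> d mod p ^ l = d' mod p ^ l" for l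
  proof (induction l)
    case 0 then show ?case by simp
  next
    case (Suc l)
    have "d mod p ^ Suc l = p ^ l * (d div p ^ l mod p) + d mod p ^ l"
      using mod_mult2_eq[of d "p ^ l" p] by (simp add: mult.commute)
    moreover have "d' mod p ^ Suc l = p ^ l * (d' div p ^ l mod p) + d' mod p ^ l"
      using mod_mult2_eq[of d' "p ^ l" p] by (simp add: mult.commute)
    ultimately show ?case using Suc by (simp add: dig_def)
  qed
  from this[OF assms(4)] show ?thesis using assms(2,3) by simp
qed

definition lc :: "nat \<Rightarrow> (nat \<Rightarrow> nat \<Rightarrow> 'a::field) \<Rightarrow> (nat \<Rightarrow> nat) \<Rightarrow> nat \<Rightarrow> 'a" where
  "lc l g c = (\<lambda>x. \<Sum>i<l. of_nat (c i) * g i x)"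

definition Phi :: "nat \<Rightarrow> nat \<Rightarrow> (nat \<Rightarrow> nat \<Rightarrow> 'a::field) \<Rightarrow> nat \<Rightarrow> nat \<Rightarrow> 'a" where
  "Phi p l g d = lc l g (\<lambda>i. dig p i d)"

definition lclosed :: "(nat \<Rightarrow> 'a::field) set \<Rightarrow> bool" where
  "lclosed C \<longleftrightarrow> (\<lambda>_. 0) \<in> C \<and> (\<forall>x\<in>C. \<forall>y\<in>C. (\<lambda>i. x i + y i) \<in> C) \<and> (\<forall>a. \<forall>x\<in>C. (\<lambda>i. a * x i) \<in> C)"

lemma lc_in:
  assumes "lclosed C" "\<forall>i<l. g i \<in> C"
  shows "lc l g c \<in> C"
  using assms(2)
proof (induction l)
  case 0 then show ?case using assms(1) by (simp add: lc_def lclosed_def)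
next
  case (Suc l)
  have a: "lc l g c \<in> C" using Suc by auto
  have b: "(\<lambda>x. of_nat (c l) * g l x) \<in> C" using Suc assms(1) by (auto simp: lclosed_def)
  have "lc (Suc l) g c = (\<lambda>x. lc l g c x + of_nat (c l) * g l x)" by (simp add: lc_def)
  thus ?case using a b assms(1) unfolding lclosed_def by metis
qed

lemma lc_add: "(\<lambda>x. lc l g c x + lc l g c' x) = lc l g (\<lambda>i. c i + c' i)"
  by (simp add: lc_def sum.distrib distrib_right)

lemma lc_scale: "(\<lambda>x. of_nat e * lc l g c x) = lc l g (\<lambda>i. e * c i)"
  by (simp add: lc_def sum_distrib_left mult.assoc)

lemma lc_add_pt: "lc l g c y + lc l g c' y = lc l g (\<lambda>i. c i + c' i) y"
  using fun_cong[OF lc_add] by metis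

lemma lc_scale_pt: "of_nat e * lc l g c y = lc l g (\<lambda>i. e * c i) y"
  using fun_cong[OF lc_scale] by metis

lemma lc_neg:
  assumes "(of_nat p :: 'a::field) = 0" "p \<ge> 1"
  shows "(\<lambda>x. - lc l g c x) = lc l (g :: nat \<Rightarrow> nat \<Rightarrow> 'a) (\<lambda>i. (p - 1) * c i)"
proof -
  have "(\<lambda>x. - lc l g c x) = (\<lambda>x. of_nat (p - 1) * lc l g c x)"
    using ofnat_neg[OF assms] by simp
  thus ?thesis by (simp add: lc_scale)
qed

lemma lc_modp:
  assumes "(of_nat p :: 'a::field) = 0"
  shows "lc l (g :: nat \<Rightarrow> nat \<Rightarrow> 'a) (\<lambda>i. c i mod p) = lc l g c"
  unfolding lc_def using ofnat_mod[OF assms] by simp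

lemma range_lc:
  assumes "p > 0" "(of_nat p :: 'a::field) = 0"
  shows "range (lc l (g :: nat \<Rightarrow> nat \<Rightarrow> 'a)) = Phi p l g ` {0..<p ^ l}"
proof
  show "Phi p l g ` {0..<p ^ l} \<subseteq> range (lc l g)" by (auto simp: Phi_def)
next
  show "range (lc l g) \<subseteq> Phi p l g ` {0..<p ^ l}"
  proof
    fix y assume "y \<in> range (lc l g)"
    then obtain c where y: "y = lc l g c" by auto
    let ?c = "\<lambda>i. c i mod p"
    have cp: "\<forall>i<l. ?c i < p" using assms(1) by simp
    let ?d = "\<Sum>i<l. ?c i * p ^ i"
    have d: "?d < p ^ l" "\<forall>i<l. dig p i ?d = ?c i" using num_digits[OF assms(1) cp] by auto
    have "Phi p l g ?d = lc l g ?c" unfolding Phi_def lc_def using d(2) by simp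
    also have "\<dots> = y" using y lc_modp[OF assms(2)] by simp
    finally show "y \<in> Phi p l g ` {0..<p ^ l}" using d(1) by force
  qed
qed

lemma Phi_Suc:
  assumes "p > 0" "d < p ^ Suc l"
  shows "Phi p (Suc l) g d = (\<lambda>x. Phi p l g (d mod p ^ l) x + of_nat (d div p ^ l) * g l x)"
proof -
  have "\<forall>x. (\<Sum>i<l. of_nat (dig p i (d mod p ^ l)) * g i x) = (\<Sum>i<l. of_nat (dig p i d) * g i x)"
    using dig_mod[OF assms(1)] by (intro allI sum.cong) auto
  thus ?thesis using dig_top[OF assms] unfolding Phi_def lc_def by simp
qed

lemma Phi_cong:
  assumes "\<forall>i<l. g i = g' i"
  shows "Phi p l g = Phi p l g'"
  using assms unfolding Phi_def lc_def by (intro ext) simp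

lemma step_no:
  assumes "prime p" "(of_nat p :: 'a::field) = 0" "0 < e" "e < p"
    and "x \<notin> range (lc l (g :: nat \<Rightarrow> nat \<Rightarrow> 'a))"
    and "\<forall>y. of_nat e * x y = Phi p l g u y - Phi p l g u' y"
  shows False
proof -
  obtain a where a: "(of_nat a :: 'a) * of_nat e = 1" using ofnat_inv[OF assms(1-4)] by blast
  have p1: "p \<ge> 1" using prime_gt_0_nat[OF assms(1)] by simp
  have neg: "lc l g (\<lambda>i. (p - 1) * dig p i u') y = - lc l g (\<lambda>i. dig p i u') y" for y
    using fun_cong[OF lc_neg[OF assms(2) p1, of l g "\<lambda>i. dig p i u'"], of y] by simp
  have "x = (\<lambda>y. of_nat a * (Phi p l g u y - Phi p l g u' y))"
  proof
    fix y
    have "of_nat a * (of_nat e * x y) = x y" using a by (simp add: mult.assoc[symmetric])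
    thus "x y = of_nat a * (Phi p l g u y - Phi p l g u' y)" using assms(6) by simp
  qed
  also have "\<dots> = (\<lambda>y. of_nat a * (lc l g (\<lambda>i. dig p i u) y + lc l g (\<lambda>i. (p - 1) * dig p i u') y))"
    unfolding neg Phi_def by simp
  also have "\<dots> = lc l g (\<lambda>i. a * (dig p i u + (p - 1) * dig p i u'))"
    by (simp only: lc_add_pt lc_scale_pt)
  also have "\<dots> \<in> range (lc l g)" by simp
  finally show False using assms(5) by simp
qed

lemma step_inj:
  assumes "prime p" "(of_nat p :: 'a::field) = 0"
    and inj: "inj_on (Phi p l g) {0..<p ^ l}"
    and x: "x \<notin> range (lc l (g :: nat \<Rightarrow> nat \<Rightarrow> 'a))"
  shows "inj_on (Phi p (Suc l) (g(l := x))) {0..<p ^ Suc l}"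
proof
  have p0: "p > 0" using assms(1) prime_gt_0_nat by blast
  have PC: "Phi p l (g(l := x)) = Phi p l g" by (rule Phi_cong) simp
  fix d d' assume d: "d \<in> {0..<p ^ Suc l}" and d': "d' \<in> {0..<p ^ Suc l}"
    and eq: "Phi p (Suc l) (g(l := x)) d = Phi p (Suc l) (g(l := x)) d'"
  let ?c = "d div p ^ l" and ?c' = "d' div p ^ l" and ?u = "d mod p ^ l" and ?u' = "d' mod p ^ l"
  have L1: "Phi p (Suc l) (g(l := x)) d = (\<lambda>y. Phi p l g ?u y + of_nat ?c * x y)"
    using Phi_Suc[OF p0, of d l "g(l := x)"] d PC by simp
  have L2: "Phi p (Suc l) (g(l := x)) d' = (\<lambda>y. Phi p l g ?u' y + of_nat ?c' * x y)"
    using Phi_Suc[OF p0, of d' l "g(l := x)"] d' PC by simp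
  have e0: "(\<lambda>y. Phi p l g ?u y + of_nat ?c * x y) = (\<lambda>y. Phi p l g ?u' y + of_nat ?c' * x y)"
    using eq unfolding L1 L2 .
  have e1: "\<forall>y. Phi p l g ?u y + of_nat ?c * x y = Phi p l g ?u' y + of_nat ?c' * x y"
  proof
    fix y show "Phi p l g ?u y + of_nat ?c * x y = Phi p l g ?u' y + of_nat ?c' * x y"
      using fun_cong[OF e0, of y] by simp
  qed
  have cp: "?c < p" "?c' < p" using d d' p0
    by (auto simp: less_mult_imp_div_less mult.commute)
  have up: "?u < p ^ l" "?u' < p ^ l" using p0 by auto
  show "d = d'"
  proof (cases "?c = ?c'")
    case True
    hence "Phi p l g ?u = Phi p l g ?u'" using e1 by auto
    hence "?u = ?u'" using inj up by (auto dest: inj_onD)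
    thus ?thesis using True by (metis div_mult_mod_eq)
  next
    case False
    show ?thesis
    proof (cases "?c' < ?c")
      case True
      have e2: "\<forall>y. of_nat (?c - ?c') * x y = Phi p l g ?u' y - Phi p l g ?u y"
        using e1 True by (simp add: of_nat_diff algebra_simps)
      have e3: "0 < ?c - ?c'" "?c - ?c' < p" using True cp by auto
      have False by (rule step_no[OF assms(1,2) e3 x e2])
      thus ?thesis ..
    next
      case F2: False
      hence lt: "?c < ?c'" using False by simp
      have e2: "\<forall>y. of_nat (?c' - ?c) * x y = Phi p l g ?u y - Phi p l g ?u' y"
        using e1 lt by (simp add: of_nat_diff algebra_simps)
      have e3: "0 < ?c' - ?c" "?c' - ?c < p" using lt cp by auto
      have False by (rule step_no[OF assms(1,2) e3 x e2])
      thus ?thesis ..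
    qed
  qed
qed

lemma basis_exists:
  assumes "prime p" "(of_nat p :: 'a::field) = 0" "lclosed C" "finite C" "card (C :: (nat \<Rightarrow> 'a) set) = p ^ L"
  shows "l \<le> L \<Longrightarrow> \<exists>g. (\<forall>i<l. g i \<in> C) \<and> inj_on (Phi p l g) {0..<p ^ l}"
proof (induction l)
  case 0
  show ?case by (auto simp: inj_on_def)
next
  case (Suc l)
  have p0: "p > 0" and p2: "p \<ge> 2" using assms(1) prime_gt_0_nat prime_ge_2_nat by auto
  obtain g where g: "\<forall>i<l. g i \<in> C" "inj_on (Phi p l g) {0..<p ^ l}" using Suc by auto
  have R: "range (lc l g) = Phi p l g ` {0..<p ^ l}" using range_lc[OF p0 assms(2)] .
  have cR: "card (range (lc l g)) = p ^ l" using R g(2) by (simp add: card_image)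
  have "\<not> C \<subseteq> range (lc l g)"
  proof
    assume "C \<subseteq> range (lc l g)"
    moreover have "finite (range (lc l g))" unfolding R by simp
    ultimately have "card C \<le> card (range (lc l g))" by (simp add: card_mono)
    hence "p ^ L \<le> p ^ l" using cR assms(5) by simp
    moreover have "p ^ l < p ^ L" using Suc.prems p2 by (simp add: power_strict_increasing)
    ultimately show False by simp
  qed
  then obtain x where x: "x \<in> C" "x \<notin> range (lc l g)" by auto
  have "inj_on (Phi p (Suc l) (g(l := x))) {0..<p ^ Suc l}"
    by (rule step_inj[OF assms(1,2) g(2) x(2)])
  moreover have "\<forall>i<Suc l. (g(l := x)) i \<in> C" using g(1) x(1) by (auto simp: less_Suc_eq)
  ultimately show ?case by blast
qed

lemma basis_bij:
  assumes "prime p" "(of_nat p :: 'a::field) = 0" "lclosed C" "finite C" "card (C :: (nat \<Rightarrow> 'a) set) = p ^ L"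
  shows "\<exists>g. (\<forall>i<L. g i \<in> C) \<and> bij_betw (Phi p L g) {0..<p ^ L} C"
proof -
  obtain g where g: "\<forall>i<L. g i \<in> C" "inj_on (Phi p L g) {0..<p ^ L}"
    using basis_exists[OF assms, of L] by auto
  have sub: "Phi p L g ` {0..<p ^ L} \<subseteq> C" using lc_in[OF assms(3) g(1)] by (auto simp: Phi_def)
  have "card (Phi p L g ` {0..<p ^ L}) = card C" using g(2) assms(5) by (simp add: card_image)
  hence "Phi p L g ` {0..<p ^ L} = C" using sub assms(4) by (simp add: card_subset_eq)
  thus ?thesis using g unfolding bij_betw_def by blast
qed

lemma kron_fourier:
  assumes "p > 0"
  shows "a < p ^ L \<Longrightarrow> b < p ^ L \<Longrightarrow>
    kron_pow p (fourier p) L a b = zeta p ^ (\<Sum>i<L. dig p i a * dig p i b)"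
proof (induction L arbitrary: a b)
  case 0 then show ?case by simp
next
  case (Suc L)
  have m: "a mod p ^ L < p ^ L" "b mod p ^ L < p ^ L" using assms by auto
  have "(\<Sum>i<L. dig p i (a mod p ^ L) * dig p i (b mod p ^ L)) = (\<Sum>i<L. dig p i a * dig p i b)"
    using dig_mod[OF assms] by (intro sum.cong) auto
  hence k: "kron_pow p (fourier p) L (a mod p ^ L) (b mod p ^ L) = zeta p ^ (\<Sum>i<L. dig p i a * dig p i b)"
    using Suc.IH[OF m] by simp
  have "kron_pow p (fourier p) (Suc L) a b = zeta p ^ (dig p L a * dig p L b) * zeta p ^ (\<Sum>i<L. dig p i a * dig p i b)"
    using k dig_top[OF assms Suc.prems(1)] dig_top[OF assms Suc.prems(2)] by (simp add: fourier_def)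
  also have "\<dots> = zeta p ^ (\<Sum>i<Suc L. dig p i a * dig p i b)"
    by (simp add: power_add[symmetric] add.commute)
  finally show ?case .
qed

lemma h_scale:
  assumes "lclosed C" "y \<in> C" "\<forall>a\<in>C. \<forall>b\<in>C. h (\<lambda>i. a i + b i) = h a * (h b :: complex)" "h (\<lambda>_. 0) = 1"
  shows "h (\<lambda>x. of_nat e * y x) = h y ^ e"
proof (induction e)
  case 0 then show ?case using assms(4) by simp
next
  case (Suc e)
  have "(\<lambda>x. of_nat (Suc e) * y x) = (\<lambda>x. y x + of_nat e * y x)" by (simp add: algebra_simps)
  moreover have "(\<lambda>x. of_nat e * y x) \<in> C" using assms(1,2) by (simp add: lclosed_def)
  ultimately show ?case using Suc assms(2,3) by simp
qed

lemma h_lc: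
  assumes "lclosed C" "\<forall>i<l. g i \<in> C" "\<forall>a\<in>C. \<forall>b\<in>C. h (\<lambda>i. a i + b i) = h a * (h b :: complex)" "h (\<lambda>_. 0) = 1"
  shows "h (lc l g c) = (\<Prod>i<l. h (g i) ^ c i)"
  using assms(2)
proof (induction l)
  case 0 then show ?case using assms(4) by (simp add: lc_def)
next
  case (Suc l)
  have "lc (Suc l) g c = (\<lambda>x. lc l g c x + of_nat (c l) * g l x)" by (simp add: lc_def)
  moreover have "lc l g c \<in> C" using lc_in[OF assms(1)] Suc.prems by auto
  moreover have "(\<lambda>x. of_nat (c l) * g l x) \<in> C" using assms(1) Suc.prems by (simp add: lclosed_def)
  moreover have "h (\<lambda>x. of_nat (c l) * g l x) = h (g l) ^ c l"
    using h_scale[OF assms(1) _ assms(3,4)] Suc.prems by simp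
  ultimately show ?case using Suc assms(3) by simp
qed

lemma prod_pow_sum: fixes l :: nat shows "(\<Prod>i<l. (z::complex) ^ a i) = z ^ (\<Sum>i<l. a i)"
  by (induction l) (simp_all add: power_add)

lemma closed_sub: "lclosed C \<Longrightarrow> x \<in> C \<Longrightarrow> y \<in> C \<Longrightarrow> (\<lambda>i. x i - y i) \<in> C"
proof -
  assume c: "lclosed C" "x \<in> C" "y \<in> C"
  have sc: "\<forall>a. \<forall>x\<in>C. (\<lambda>i. a * x i) \<in> C" and ad: "\<forall>x\<in>C. \<forall>y\<in>C. (\<lambda>i. x i + y i) \<in> C"
    using c(1) unfolding lclosed_def by blast+
  have m1: "(\<lambda>i. (-1) * y i) \<in> C" using sc c(3) by blast
  have "(\<lambda>i. x i + (-1) * y i) \<in> C" using ad[rule_format, OF c(2) m1] by simp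
  moreover have "(\<lambda>i. x i + (-1) * y i) = (\<lambda>i. x i - y i)" by simp
  ultimately show ?thesis by simp
qed

lemma closed_add: "lclosed C \<Longrightarrow> x \<in> C \<Longrightarrow> y \<in> C \<Longrightarrow> (\<lambda>i. x i + y i) \<in> C"
  by (simp add: lclosed_def)

lemma Fvec_sub: "x \<in> Fvec N \<Longrightarrow> y \<in> Fvec N \<Longrightarrow> (\<lambda>i. x i - y i) \<in> Fvec N"
  by (simp add: Fvec_def)
lemma Fvec_add: "x \<in> Fvec N \<Longrightarrow> y \<in> Fvec N \<Longrightarrow> (\<lambda>i. x i + y i) \<in> Fvec N"
  by (simp add: Fvec_def)

lemma block_sub: "block n t (\<lambda>i. x i - y i) = (\<lambda>i. block n t x i - block n t y i)"
  by (rule ext) (simp add: block_def)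
lemma block_add: "block n t (\<lambda>i. x i + y i) = (\<lambda>i. block n t x i + block n t y i)"
  by (rule ext) (simp add: block_def)

definition Cm :: "nat \<Rightarrow> nat \<Rightarrow> (nat \<Rightarrow> 'a::field) set \<Rightarrow> (nat \<Rightarrow> 'a) set" where
  "Cm n m C = {x \<in> Fvec (n * m). \<forall>t<m. block n t x \<in> C}"

lemma Cm_sub: "lclosed C \<Longrightarrow> x \<in> Cm n m C \<Longrightarrow> y \<in> Cm n m C \<Longrightarrow> (\<lambda>i. x i - y i) \<in> Cm n m C"
  unfolding Cm_def by (auto simp: Fvec_sub block_sub closed_sub)
lemma Cm_add: "lclosed C \<Longrightarrow> x \<in> Cm n m C \<Longrightarrow> y \<in> Cm n m C \<Longrightarrow> (\<lambda>i. x i + y i) \<in> Cm n m C"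
  unfolding Cm_def by (auto simp: Fvec_add block_add closed_add)
lemma Cm_zero: "lclosed C \<Longrightarrow> (\<lambda>_. 0) \<in> Cm n m C"
  unfolding Cm_def by (auto simp: Fvec_def block_def lclosed_def)

lemma V_val:
  "tensor_pow n m (phi p N C f j) x =
    (if x \<in> Cm n m C then complex_of_real (1 / sqrt (real N)) ^ m * (\<Prod>t<m. zeta p ^ f j (block n t x)) else 0)"
proof (cases "x \<in> Cm n m C")
  case True
  hence "\<forall>t<m. block n t x \<in> C" "x \<in> Fvec (n * m)" by (auto simp: Cm_def)
  hence "tensor_pow n m (phi p N C f j) x = (\<Prod>t<m. complex_of_real (1 / sqrt (real N)) * zeta p ^ f j (block n t x))"
    unfolding tensor_pow_def phi_def by (auto intro: prod.cong)
  also have "\<dots> = complex_of_real (1 / sqrt (real N)) ^ m * (\<Prod>t<m. zeta p ^ f j (block n t x))"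
    by (simp only: prod.distrib prod_constant card_lessThan)
  finally show ?thesis using True by simp
next
  case False
  show ?thesis
  proof (cases "x \<in> Fvec (n * m)")
    case True
    then obtain t where t: "t < m" "block n t x \<notin> C" using False by (auto simp: Cm_def)
    have "(\<Prod>t<m. phi p N C f j (block n t x)) = 0"
      using t by (intro prod_zero) (auto simp: phi_def)
    thus ?thesis using False by (simp add: tensor_pow_def)
  next
    case False
    thus ?thesis by (auto simp: tensor_pow_def Cm_def)
  qed
qed

definition ee :: "nat \<Rightarrow> (nat \<Rightarrow> 'a::field) \<Rightarrow> (nat \<Rightarrow> 'a) \<Rightarrow> nat \<Rightarrow> 'a" where
  "ee n u z = (\<lambda>i. if i < n then u i else if i < 2 * n then z (i - n) else 0)"

lemma ee_blocks:
  assumes "u \<in> Fvec n" "z \<in> Fvec n"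
  shows "block n 0 (ee n u z) = u" "block n 1 (ee n u z) = z" "t \<ge> 2 \<Longrightarrow> block n t (ee n u z) = (\<lambda>_. 0)"
proof -
  show "block n 0 (ee n u z) = u" using assms by (auto simp: block_def ee_def Fvec_def)
  show "block n 1 (ee n u z) = z" using assms by (auto simp: block_def ee_def Fvec_def)
  assume t2: "t \<ge> 2"
  show "block n t (ee n u z) = (\<lambda>_. 0)"
  proof (rule ext)
    fix i
    have "t * n \<ge> 2 * n" using t2 by (simp add: mult_le_mono1)
    hence "\<not> t * n + i < n" "\<not> t * n + i < 2 * n" by linarith+
    thus "block n t (ee n u z) i = 0" unfolding block_def ee_def by simp
  qed
qed

lemma ee_Fvec:
  assumes "u \<in> Fvec n" "z \<in> Fvec n" "m \<ge> 2"
  shows "ee n u z \<in> Fvec (n * m)"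
proof -
  have "ee n u z i = 0" if "i \<ge> n * m" for i
  proof -
    have "n * 2 \<le> n * m" using assms(3) by simp
    hence "\<not> i < n" "\<not> i < 2 * n" using that by linarith+
    thus ?thesis unfolding ee_def by simp
  qed
  thus ?thesis unfolding Fvec_def by auto
qed

lemma ee_Cm:
  assumes "lclosed C" "C \<subseteq> Fvec n" "u \<in> C" "z \<in> C" "m \<ge> 2"
  shows "ee n u z \<in> Cm n m C"
proof -
  have F: "u \<in> Fvec n" "z \<in> Fvec n" using assms by auto
  have "block n t (ee n u z) \<in> C" for t
  proof -
    consider "t = 0" | "t = 1" | "t \<ge> 2" by linarith
    thus ?thesis using ee_blocks[OF F] assms(1,3,4) by cases (auto simp: lclosed_def)
  qed
  thus ?thesis using ee_Fvec[OF F assms(5)] by (simp add: Cm_def)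
qed

lemma ee_sub: "(\<lambda>i. ee n u z i - ee n u' z' i) = ee n (\<lambda>i. u i - u' i) (\<lambda>i. z i - z' i)"
  by (rule ext) (simp add: ee_def)

lemma ee_zero: "ee n (\<lambda>_. 0) (\<lambda>_. 0) = (\<lambda>_. 0)"
  by (rule ext) (simp add: ee_def)

lemma prod_two:
  fixes m :: nat and F :: "nat \<Rightarrow> complex"
  assumes "m \<ge> 2" "\<forall>t\<ge>2. F t = 1"
  shows "(\<Prod>t<m. F t) = F 0 * (F 1 :: complex)"
proof -
  obtain m' where m: "m = Suc (Suc m')" using assms(1) by (metis add_2_eq_Suc le_Suc_ex)
  have "(\<Prod>t<m'. F (Suc (Suc t))) = 1" using assms(2) by (intro prod.neutral) auto
  thus ?thesis unfolding m prod.lessThan_Suc_shift by simp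
qed

lemma V_ee:
  assumes "lclosed C" "C \<subseteq> Fvec n" "u \<in> C" "z \<in> C" "m \<ge> 2" "f j (\<lambda>_. 0) = 0"
  shows "tensor_pow n m (phi p N C f j) (ee n u z) =
     complex_of_real (1 / sqrt (real N)) ^ m * (zeta p ^ f j u * zeta p ^ f j z)"
proof -
  have F: "u \<in> Fvec n" "z \<in> Fvec n" using assms by auto
  have pr: "(\<Prod>t<m. zeta p ^ f j (block n t (ee n u z))) = zeta p ^ f j (block n 0 (ee n u z)) * zeta p ^ f j (block n 1 (ee n u z))"
    using ee_blocks(3)[OF F] assms(6) by (intro prod_two[OF assms(5)]) auto
  have mem: "ee n u z \<in> Cm n m C" by (rule ee_Cm[OF assms(1-5)])
  have "tensor_pow n m (phi p N C f j) (ee n u z) = (if ee n u z \<in> Cm n m C then complex_of_real (1 / sqrt (real N)) ^ m * (\<Prod>t<m. zeta p ^ f j (block n t (ee n u z))) else 0)"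
    by (rule V_val)
  also have "\<dots> = complex_of_real (1 / sqrt (real N)) ^ m * (\<Prod>t<m. zeta p ^ f j (block n t (ee n u z)))"
    by (rule if_P[OF mem])
  also have "\<dots> = complex_of_real (1 / sqrt (real N)) ^ m * (zeta p ^ f j u * zeta p ^ f j z)"
    unfolding pr ee_blocks(1,2)[OF F] ..
  finally show ?thesis .
qed

lemma stab_additive:
  fixes C :: "(nat \<Rightarrow> 'a::field) set" and f :: "nat \<Rightarrow> (nat \<Rightarrow> 'a) \<Rightarrow> nat"
  assumes cl: "lclosed C" and CF: "C \<subseteq> Fvec n" and fin: "finite C" and N0: "N > 0" and m2: "m \<ge> 2"
    and f0: "\<forall>c\<in>C. f 0 c = 0" and fz: "\<forall>j<N. f j (\<lambda>_. 0) = 0"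
    and orth: "\<forall>j<N. \<forall>j'<N. (\<Sum>c\<in>C. zeta p ^ f j c * cnj (zeta p ^ f j' c)) = (if j = j' then of_nat N else 0)"
    and stab: "stabilizer_code p r (n * m) (cspan_fin N (\<lambda>j. tensor_pow n m (phi p N C f j)))"
  shows "\<forall>j<N. \<forall>a\<in>C. \<forall>b\<in>C. zeta p ^ f j (\<lambda>i. a i + b i) = zeta p ^ f j a * zeta p ^ f j b"
proof -
  define V where "V = (\<lambda>j. tensor_pow n m (phi p N C f j))"
  define Q where "Q = cspan_fin N V"
  define s where "s = complex_of_real (1 / sqrt (real N))"
  define CM where "CM = Cm n m C"
  have s0: "s \<noteq> 0" using N0 by (simp add: s_def)
  have Vv: "V j x = (if x \<in> CM then s ^ m * (\<Prod>t<m. zeta p ^ f j (block n t x)) else 0)" for j x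
    unfolding V_def s_def CM_def by (rule V_val)
  have VQ: "V j \<in> Q" if "j < N" for j
  proof -
    have "(\<lambda>x. \<Sum>i<N. (if i = j then 1 else 0) * V i x) = (\<lambda>x. \<Sum>i<N. (if i = j then V j x else 0))"
      by (intro ext sum.cong) auto
    also have "\<dots> = V j" using that by (simp add: sum.delta)
    finally have "(\<lambda>x. \<Sum>i<N. (if i = j then 1 else 0) * V i x) = V j" .
    thus ?thesis unfolding Q_def cspan_fin_def
      by (intro CollectI exI[where x="\<lambda>i. if i = j then 1 else 0"]) simp
  qed
  have Qz: "v x = 0" if vQ: "v \<in> Q" and xn: "x \<notin> CM" for v x
  proof -
    obtain w where "v = (\<lambda>x. \<Sum>j<N. w j * V j x)" using vQ unfolding Q_def cspan_fin_def by blast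
    thus ?thesis using xn Vv by simp
  qed
  have V0: "V 0 x = s ^ m" if "x \<in> CM" for x
  proof -
    have "\<forall>t<m. block n t x \<in> C" using that by (simp add: CM_def Cm_def)
    hence "(\<Prod>t<m. zeta p ^ f 0 (block n t x)) = 1" using f0 by (intro prod.neutral) auto
    thus ?thesis using Vv that by simp
  qed
  have zCM: "(\<lambda>_. 0) \<in> CM" unfolding CM_def by (rule Cm_zero[OF cl])
  have CMs: "(\<lambda>i. x i - y i) \<in> CM" if "x \<in> CM" "y \<in> CM" for x y
    using that Cm_sub[OF cl] unfolding CM_def by blast
  have CMa: "(\<lambda>i. x i + y i) \<in> CM" if "x \<in> CM" "y \<in> CM" for x y
    using that Cm_add[OF cl] unfolding CM_def by blast
  have CMs2: "y \<in> CM" if "(\<lambda>i. y i - a i) \<in> CM" "a \<in> CM" for y a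
  proof -
    have "(\<lambda>i. (y i - a i) + a i) \<in> CM" using CMa[OF that] by simp
    thus ?thesis by simp
  qed
  define A where "A = {a \<in> Fvec (n * m). \<forall>v\<in>Q. \<forall>y. v (\<lambda>i. y i - a i) = v y}"
  have Ause: "v (\<lambda>i. x i - a i) = v x" if aA: "a \<in> A" and vQ: "v \<in> Q" for a v x
    using aA vQ unfolding A_def by blast
  have ACM: "a \<in> CM" if "a \<in> A" for a
  proof -
    have "V 0 (\<lambda>i. a i - a i) = V 0 a" using that VQ[OF N0] unfolding A_def by blast
    hence "V 0 a = s ^ m" using V0[OF zCM] by simp
    thus ?thesis using Vv s0 by (auto split: if_splits)
  qed
  have Atr: "y \<in> A \<longleftrightarrow> (\<lambda>i. y i - a i) \<in> A" if aA: "a \<in> A" for a y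
  proof
    assume yA: "y \<in> A"
    have "(\<lambda>i. y i - a i) \<in> Fvec (n * m)" using yA aA by (auto simp: A_def Fvec_sub)
    moreover have "v (\<lambda>i. z i - (y i - a i)) = v z" if "v \<in> Q" for v z
    proof -
      have "v (\<lambda>i. z i - (y i - a i)) = v (\<lambda>i. (z i + a i) - y i)" by (simp add: algebra_simps)
      also have "\<dots> = v (\<lambda>i. z i + a i)" using Ause[OF yA that, of "\<lambda>i. z i + a i"] by simp
      also have "\<dots> = v (\<lambda>i. (z i + a i) - a i)" using Ause[OF aA that, of "\<lambda>i. z i + a i"] by simp
      finally show ?thesis by simp
    qed
    ultimately show "(\<lambda>i. y i - a i) \<in> A" unfolding A_def by blast
  next
    assume uA: "(\<lambda>i. y i - a i) \<in> A"
    have "(\<lambda>i. (y i - a i) + a i) \<in> Fvec (n * m)" using uA aA by (intro Fvec_add) (auto simp: A_def)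
    hence "y \<in> Fvec (n * m)" by simp
    moreover have "v (\<lambda>i. z i - y i) = v z" if "v \<in> Q" for v z
    proof -
      have "v (\<lambda>i. z i - y i) = v (\<lambda>i. (z i - y i + a i) - a i)" by simp
      also have "\<dots> = v (\<lambda>i. z i - y i + a i)" using Ause[OF aA that, of "\<lambda>i. z i - y i + a i"] by simp
      also have "\<dots> = v (\<lambda>i. z i - (y i - a i))" by (simp add: algebra_simps)
      also have "\<dots> = v z" using Ause[OF uA that, of z] by simp
      finally show ?thesis .
    qed
    ultimately show "y \<in> A" unfolding A_def by blast
  qed
  define vA where "vA = (\<lambda>y. if y \<in> A then 1 else (0::complex))"
  have vAQ: "vA \<in> Q"
  proof -
    have Qeq: "Q = {v \<in> qspace (n * m). \<forall>E\<in>Stab p r (n * m) Q. pauli_act p r (n * m) E v = v}"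
      using stab unfolding stabilizer_code_def Q_def V_def .
    have "vA \<in> qspace (n * m)" unfolding qspace_def vA_def A_def by auto
    moreover have "pauli_act p r (n * m) E vA = vA" if ES: "E \<in> Stab p r (n * m) Q" for E
    proof -
      obtain w a b where E: "E = (w, a, b)" by (metis prod_cases3)
      have pa: "w \<in> phases p" "a \<in> Fvec (n * m)" "b \<in> Fvec (n * m)"
        using ES unfolding E Stab_def pauli_def by auto
      have w0: "w \<noteq> 0" using pa(1) unfolding phases_def zeta_def by (auto split: if_splits)
      define T where "T = (\<lambda>y. zeta p ^ fp_rep p (trace p r (\<Sum>i<n * m. b i * (y i - a i))))"
      have T0: "T y \<noteq> 0" for y unfolding T_def zeta_def by simp
      have act: "pauli_act p r (n * m) E v = (\<lambda>y. w * T y * v (\<lambda>i. y i - a i))" for v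
        unfolding E pauli_act_def T_def by simp
      have ESv: "\<forall>v\<in>Q. pauli_act p r (n * m) E v = v" using ES unfolding Stab_def by blast
      have F: "w * T y * v (\<lambda>i. y i - a i) = v y" if vQ: "v \<in> Q" for v y
      proof -
        have "pauli_act p r (n * m) E v y = v y" using ESv vQ by simp
        thus ?thesis unfolding act .
      qed
      have aCM: "a \<in> CM"
      proof -
        have "w * T a * V 0 (\<lambda>i. a i - a i) = V 0 a" using F[OF VQ[OF N0]] .
        hence eq: "w * T a * s ^ m = V 0 a" using V0[OF zCM] by simp
        have nz: "w * T a * s ^ m \<noteq> 0" using w0 T0[of a] s0 by simp
        have "V 0 a \<noteq> 0" using eq nz by simp
        thus ?thesis using Vv by (auto split: if_splits)
      qed
      have ph: "w * T y = 1" if "(\<lambda>i. y i - a i) \<in> CM" for y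
      proof -
        have yC: "y \<in> CM" using CMs2[OF that aCM] .
        have "w * T y * V 0 (\<lambda>i. y i - a i) = V 0 y" using F[OF VQ[OF N0]] .
        hence "w * T y * s ^ m = s ^ m" using V0[OF yC] V0[OF that] by simp
        thus ?thesis using s0 by simp
      qed
      have aA: "a \<in> A"
      proof -
        have "v (\<lambda>i. y i - a i) = v y" if "v \<in> Q" for v y
        proof (cases "(\<lambda>i. y i - a i) \<in> CM")
          case True
          thus ?thesis using F[OF that, of y] ph[OF True] by simp
        next
          case False
          hence yn: "y \<notin> CM" using CMs aCM by blast
          show ?thesis using Qz[OF that yn] Qz[OF that False] by simp
        qed
        thus ?thesis using pa(2) unfolding A_def by blast
      qed
      show ?thesis
      proof
        fix y
        show "pauli_act p r (n * m) E vA y = vA y"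
        proof (cases "(\<lambda>i. y i - a i) \<in> CM")
          case True
          thus ?thesis using ph[OF True] Atr[OF aA, of y] act unfolding vA_def by simp
        next
          case False
          hence "y \<notin> CM" using CMs aCM by blast
          hence "y \<notin> A" "(\<lambda>i. y i - a i) \<notin> A" using ACM False by auto
          thus ?thesis using act unfolding vA_def by simp
        qed
      qed
    qed
    ultimately show ?thesis by (subst Qeq) blast
  qed
  then obtain w where w: "vA = (\<lambda>x. \<Sum>j<N. w j * V j x)" unfolding Q_def cspan_fin_def by blast
  have rowsum: "(\<Sum>z\<in>C. zeta p ^ f j z) = (if j = 0 then of_nat N else 0)" if "j < N" for j
  proof -
    have "(\<Sum>z\<in>C. zeta p ^ f j z) = (\<Sum>z\<in>C. zeta p ^ f j z * cnj (zeta p ^ f 0 z))"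
      using f0 by (intro sum.cong) auto
    thus ?thesis using orth that N0 by simp
  qed
  have Ve: "V j (ee n u z) = s ^ m * (zeta p ^ f j u * zeta p ^ f j z)" if "j < N" "u \<in> C" "z \<in> C" for j u z
    unfolding V_def s_def using V_ee[OF cl CF that(2,3) m2] fz that(1) by simp
  have sumu: "(\<Sum>z\<in>C. vA (ee n u z)) = w 0 * s ^ m * of_nat N" if uC: "u \<in> C" for u
  proof -
    have "(\<Sum>z\<in>C. vA (ee n u z)) = (\<Sum>z\<in>C. \<Sum>j<N. w j * (s ^ m * (zeta p ^ f j u * zeta p ^ f j z)))"
      unfolding w using Ve uC by (intro sum.cong) auto
    also have "\<dots> = (\<Sum>j<N. w j * s ^ m * zeta p ^ f j u * (\<Sum>z\<in>C. zeta p ^ f j z))"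
      by (subst sum.swap) (simp add: sum_distrib_left mult.assoc)
    also have "\<dots> = (\<Sum>j<N. if j = 0 then w 0 * s ^ m * zeta p ^ f 0 u * of_nat N else 0)"
      using rowsum by (intro sum.cong) auto
    also have "\<dots> = w 0 * s ^ m * of_nat N" using N0 f0 uC by simp
    finally show ?thesis .
  qed
  have cnt: "(\<Sum>z\<in>C. vA (ee n u z)) = of_nat (card {z \<in> C. ee n u z \<in> A})" for u
    unfolding vA_def using fin by (simp add: sum.If_cases Int_def conj_commute)
  have e00: "ee n (\<lambda>_. 0) (\<lambda>_. 0) = (\<lambda>_. 0::'a)" by (rule ext) (simp add: ee_def)
  have zA: "(\<lambda>_. 0) \<in> A" unfolding A_def Fvec_def by simp
  have zC: "(\<lambda>_. 0) \<in> C" using cl by (simp add: lclosed_def)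
  have pos: "card {z \<in> C. ee n (\<lambda>_. 0) z \<in> A} > 0"
  proof -
    have "(\<lambda>_. 0) \<in> {z \<in> C. ee n (\<lambda>_. 0) z \<in> A}" using zA zC e00 by simp
    moreover have "finite {z \<in> C. ee n (\<lambda>_. 0) z \<in> A}" using fin by simp
    ultimately show ?thesis by (auto simp only: card_gt_0_iff)
  qed
  have exz: "\<exists>z\<in>C. ee n u z \<in> A" if uC: "u \<in> C" for u
  proof -
    have "(of_nat (card {z \<in> C. ee n u z \<in> A}) :: complex) = (\<Sum>z\<in>C. vA (ee n u z))"
      by (rule cnt[symmetric])
    also have "\<dots> = w 0 * s ^ m * of_nat N" by (rule sumu[OF uC])
    also have "\<dots> = (\<Sum>z\<in>C. vA (ee n (\<lambda>_. 0) z))" by (rule sumu[OF zC, symmetric])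
    also have "\<dots> = of_nat (card {z \<in> C. ee n (\<lambda>_. 0) z \<in> A})" by (rule cnt)
    finally have "card {z \<in> C. ee n u z \<in> A} = card {z \<in> C. ee n (\<lambda>_. 0) z \<in> A}"
      by (simp only: of_nat_eq_iff)
    hence "card {z \<in> C. ee n u z \<in> A} > 0" using pos by simp
    hence "{z \<in> C. ee n u z \<in> A} \<noteq> {}" by (auto simp only: card_gt_0_iff)
    thus ?thesis by blast
  qed
  have key: "zeta p ^ f j (\<lambda>i. y i - u i) * zeta p ^ f j u = zeta p ^ f j y"
    if j: "j < N" and uC: "u \<in> C" and yC: "y \<in> C" for j u y
  proof -
    obtain z where z: "z \<in> C" "ee n u z \<in> A" using exz[OF uC] by blast
    have tr: "V j (\<lambda>i. x i - ee n u z i) = V j x" for x using Ause[OF z(2) VQ[OF j]] .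
    have "V j (ee n (\<lambda>_. 0) (\<lambda>_. 0)) = V j (ee n u z)"
      using tr[of "ee n u z"] by (simp add: ee_sub e00)
    hence e1: "s ^ m = s ^ m * (zeta p ^ f j u * zeta p ^ f j z)"
      using Ve[OF j zC zC] Ve[OF j uC z(1)] fz j by simp
    have ymu: "(\<lambda>i. y i - u i) \<in> C" using closed_sub[OF cl yC uC] .
    have "V j (ee n (\<lambda>i. y i - u i) (\<lambda>i. z i - z i)) = V j (ee n y z)"
      using tr[of "ee n y z"] by (simp add: ee_sub)
    hence "V j (ee n (\<lambda>i. y i - u i) (\<lambda>_. 0)) = V j (ee n y z)" by simp
    hence e2: "s ^ m * (zeta p ^ f j (\<lambda>i. y i - u i) * 1) = s ^ m * (zeta p ^ f j y * zeta p ^ f j z)"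
      using Ve[OF j ymu zC] Ve[OF j yC z(1)] fz j by simp
    have a1: "zeta p ^ f j u * zeta p ^ f j z = 1" using e1 s0 by simp
    have a2: "zeta p ^ f j (\<lambda>i. y i - u i) = zeta p ^ f j y * zeta p ^ f j z" using e2 s0 by simp
    have "zeta p ^ f j (\<lambda>i. y i - u i) * zeta p ^ f j u = (zeta p ^ f j y * zeta p ^ f j z) * zeta p ^ f j u"
      by (simp only: a2)
    also have "\<dots> = zeta p ^ f j y * (zeta p ^ f j u * zeta p ^ f j z)" by (simp only: mult_ac)
    also have "\<dots> = zeta p ^ f j y" by (simp only: a1 mult_1_right)
    finally show ?thesis .
  qed
  show ?thesis
  proof (intro allI impI ballI)
    fix j a b assume j: "j < N" and aC: "a \<in> C" and bC: "b \<in> C"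
    have "zeta p ^ f j (\<lambda>i. (a i + b i) - b i) * zeta p ^ f j b = zeta p ^ f j (\<lambda>i. a i + b i)"
      using key[OF j bC closed_add[OF cl aC bC]] .
    thus "zeta p ^ f j (\<lambda>i. a i + b i) = zeta p ^ f j a * zeta p ^ f j b" by simp
  qed
qed

lemma zeta_cnj: "zeta p ^ a * cnj (zeta p ^ a) = 1"
proof -
  have "norm (zeta p ^ a) = 1" by (simp add: zeta_def norm_power)
  hence "zeta p ^ a * cnj (zeta p ^ a) = complex_of_real (1 ^ 2)"
    by (metis complex_norm_square)
  thus ?thesis by simp
qed

theorem theorem4p2:
  fixes p r n k m :: nat
    and C :: "(nat \<Rightarrow> 'a::{finite,field}) set"
    and f :: "nat \<Rightarrow> (nat \<Rightarrow> 'a) \<Rightarrow> nat"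
  assumes "prime p" and "r \<ge> 1" and "CARD('a) = p ^ r"
    and "1 \<le> k" and "k < n" and "m \<ge> 2"
    and "linear_code n k C"
    and "\<forall>j<CARD('a) ^ k. \<forall>c\<in>C. f j c < p"
    and "\<forall>j<CARD('a) ^ k. \<forall>j'<CARD('a) ^ k.
           (\<Sum>c\<in>C. zeta p ^ f j c * cnj (zeta p ^ f j' c))
             = (if j = j' then of_nat (CARD('a) ^ k) else 0)"
    and "\<forall>c\<in>C. f 0 c = 0"
    and "\<forall>j<CARD('a) ^ k. f j (\<lambda>_. 0) = 0"
    and "stabilizer_code p r (n * m)
           (cspan_fin (CARD('a) ^ k) (\<lambda>j. tensor_pow n m (phi p (CARD('a) ^ k) C f j)))"
  shows "bh_equiv p (\<lambda>j c. zeta p ^ f j c) {0..<CARD('a) ^ k} C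
           (kron_pow p (fourier p) (r * k)) {0..<p ^ (r * k)} {0..<p ^ (r * k)}"
proof -
  define N where "N = CARD('a) ^ k"
  define L where "L = r * k"
  have p0: "p > 0" using assms(1) prime_gt_0_nat by blast
  have charp: "(of_nat p :: 'a) = 0" by (rule char_p[OF assms(1,3)])
  have NL: "N = p ^ L" unfolding N_def L_def using assms(3) by (simp add: power_mult)
  have N0: "N > 0" unfolding N_def by simp
  obtain B where B: "C \<subseteq> Fvec n" "C = {lin_comb B l | l. True}"
    using assms(7) unfolding linear_code_def by blast
  have cl: "lclosed C"
  proof -
    have "(\<lambda>_. 0) = lin_comb B (\<lambda>_. 0)" by (simp add: lin_comb_def)
    hence z: "(\<lambda>_. 0) \<in> C" using B(2) by blast
    have a: "(\<lambda>i. x i + y i) \<in> C" if xC: "x \<in> C" and yC: "y \<in> C" for x y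
    proof -
      obtain l1 l2 where "x = lin_comb B l1" "y = lin_comb B l2" using xC yC B(2) by blast
      hence "(\<lambda>i. x i + y i) = lin_comb B (\<lambda>b. l1 b + l2 b)"
        by (simp add: lin_comb_def sum.distrib distrib_right)
      thus ?thesis using B(2) by blast
    qed
    have s: "(\<lambda>i. c * x i) \<in> C" if xC: "x \<in> C" for c x
    proof -
      obtain l1 where "x = lin_comb B l1" using xC B(2) by blast
      hence "(\<lambda>i. c * x i) = lin_comb B (\<lambda>b. c * l1 b)"
        by (simp add: lin_comb_def sum_distrib_left mult.assoc)
      thus ?thesis using B(2) by blast
    qed
    show ?thesis unfolding lclosed_def using z a s by blast
  qed
  have f0: "\<forall>c\<in>C. f 0 c = 0" using assms(10) .
  have fz: "\<forall>j<N. f j (\<lambda>_. 0) = 0" using assms(11) unfolding N_def .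
  have orth: "\<forall>j<N. \<forall>j'<N. (\<Sum>c\<in>C. zeta p ^ f j c * cnj (zeta p ^ f j' c)) = (if j = j' then of_nat N else 0)"
    using assms(9) unfolding N_def .
  have cardC: "card C = N"
  proof -
    have "(\<Sum>c\<in>C. zeta p ^ f 0 c * cnj (zeta p ^ f 0 c)) = of_nat N" using orth N0 by simp
    moreover have "(\<Sum>c\<in>C. zeta p ^ f 0 c * cnj (zeta p ^ f 0 c)) = of_nat (card C)"
      by (simp only: zeta_cnj) simp
    ultimately show ?thesis by (simp only: of_nat_eq_iff)
  qed
  have fin: "finite C" using cardC N0 by (metis card.infinite less_irrefl)
  have hadd: "\<forall>j<N. \<forall>a\<in>C. \<forall>b\<in>C. zeta p ^ f j (\<lambda>i. a i + b i) = zeta p ^ f j a * zeta p ^ f j b"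
    by (rule stab_additive[OF cl B(1) fin N0 assms(6) f0 fz orth assms(12)[folded N_def]])
  obtain g where g: "\<forall>i<L. g i \<in> C" "bij_betw (Phi p L g) {0..<p ^ L} C"
    using basis_bij[OF assms(1) charp cl fin, of L] cardC NL by auto
  have hPhi: "zeta p ^ f j (Phi p L g d) = zeta p ^ (\<Sum>i<L. f j (g i) * dig p i d)" if j: "j < N" for j d
  proof -
    have "zeta p ^ f j (Phi p L g d) = (\<Prod>i<L. (zeta p ^ f j (g i)) ^ dig p i d)"
      unfolding Phi_def
      by (rule h_lc[OF cl g(1), where h="\<lambda>c. zeta p ^ f j c"]) (use hadd j fz in auto)
    also have "\<dots> = (\<Prod>i<L. zeta p ^ (f j (g i) * dig p i d))" by (simp add: power_mult)
    also have "\<dots> = zeta p ^ (\<Sum>i<L. f j (g i) * dig p i d)" by (rule prod_pow_sum)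
    finally show ?thesis .
  qed
  define \<sigma> where "\<sigma> = (\<lambda>j. \<Sum>i<L. f j (g i) * p ^ i)"
  have fgp: "\<forall>i<L. f j (g i) < p" if "j < N" for j using assms(8) g(1) that unfolding N_def by blast
  have sig: "\<sigma> j < p ^ L" "\<forall>i<L. dig p i (\<sigma> j) = f j (g i)" if "j < N" for j
    using num_digits[OF p0 fgp[OF that]] unfolding \<sigma>_def by auto
  have inj: "inj_on \<sigma> {0..<N}"
  proof
    fix j j' assume j: "j \<in> {0..<N}" and j': "j' \<in> {0..<N}" and eq: "\<sigma> j = \<sigma> j'"
    have fe: "\<forall>i<L. f j (g i) = f j' (g i)" using sig(2)[of j] sig(2)[of j'] j j' eq by auto
    have hc: "zeta p ^ f j c = zeta p ^ f j' c" if c: "c \<in> C" for c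
    proof -
      obtain d where d: "d \<in> {0..<p ^ L}" "c = Phi p L g d" using g(2) c unfolding bij_betw_def by auto
      have "(\<Sum>i<L. f j (g i) * dig p i d) = (\<Sum>i<L. f j' (g i) * dig p i d)"
        using fe by (intro sum.cong) auto
      thus ?thesis using hPhi[of j d] hPhi[of j' d] j j' d(2) by simp
    qed
    have "(\<Sum>c\<in>C. zeta p ^ f j c * cnj (zeta p ^ f j' c)) = (\<Sum>c\<in>C. zeta p ^ f j c * cnj (zeta p ^ f j c))"
      using hc by (intro sum.cong) auto
    also have "\<dots> = of_nat N" using orth j by simp
    finally show "j = j'" using orth j j' N0 by (auto split: if_splits)
  qed
  have bs: "bij_betw \<sigma> {0..<N} {0..<p ^ L}"
  proof -
    have sub: "\<sigma> ` {0..<N} \<subseteq> {0..<p ^ L}" using sig(1) by auto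
    have "card (\<sigma> ` {0..<N}) = card {0..<p ^ L}" using inj NL by (simp add: card_image)
    hence "\<sigma> ` {0..<N} = {0..<p ^ L}" using sub by (simp add: card_subset_eq)
    thus ?thesis using inj unfolding bij_betw_def by blast
  qed
  define \<tau> where "\<tau> = the_inv_into {0..<p ^ L} (Phi p L g)"
  have bt: "bij_betw \<tau> C {0..<p ^ L}" unfolding \<tau>_def by (rule bij_betw_the_inv_into[OF g(2)])
  have tinv: "Phi p L g (\<tau> c) = c" if "c \<in> C" for c
    unfolding \<tau>_def using g(2) that by (simp add: f_the_inv_into_f_bij_betw)
  have main: "zeta p ^ f j c = 1 * 1 * kron_pow p (fourier p) L (\<sigma> j) (\<tau> c)"
    if j: "j \<in> {0..<N}" and c: "c \<in> C" for j c
  proof -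
    have tc: "\<tau> c < p ^ L" using bt c unfolding bij_betw_def by auto
    have "zeta p ^ f j c = zeta p ^ f j (Phi p L g (\<tau> c))" using tinv[OF c] by simp
    also have "\<dots> = zeta p ^ (\<Sum>i<L. f j (g i) * dig p i (\<tau> c))" using hPhi j by simp
    also have "\<dots> = zeta p ^ (\<Sum>i<L. dig p i (\<sigma> j) * dig p i (\<tau> c))"
      using sig(2)[of j] j by (intro arg_cong[where f="\<lambda>x. zeta p ^ x"] sum.cong) auto
    also have "\<dots> = kron_pow p (fourier p) L (\<sigma> j) (\<tau> c)"
      using kron_fourier[OF p0 sig(1)[of j] tc] j by simp
    finally show ?thesis by simp
  qed
  show ?thesis
    unfolding bh_equiv_def N_def[symmetric] L_def[symmetric]
    using bs bt main by (intro exI[of _ \<sigma>] exI[of _ \<tau>] exI[of _ "\<lambda>_. 1"]) auto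
qed

end
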